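(* Let $\ell \to r~[\phi]$ be a constrained rewrite rule. Let $p_1,\ldots,p_n$ be the positions such that $\{p_1,\ldots,p_n\} = \{ p \in \mathcal{P}os(\ell) \mid \ell|_p \in \mathrm{Val} \cup \mathcal{V}ar(\phi) \}$, and let $x_1,\ldots,x_n$ be pairwise distinct variables with $\{x_1,\ldots,x_n\} \cap \mathcal{V}ar(\ell,r,\phi) = \emptyset$. Let $\ell' \to r~[\phi']$ be the constrained rule with $\ell' = \ell[x_1,\ldots,x_n]_{p_1,\ldots,p_n}$ (i.e., $\ell|_{p_i}$ replaced by $x_i$ for each $i$) and $\phi' = \phi \land \bigwedge_{i=1}^n (x_i = \ell|_{p_i}) \land \bigwedge_{y \in \mathcal{V}ar(r)\setminus\mathcal{V}ar(\ell,\phi)} (y = y)$. Then ${\to_{\ell \to r~[\phi]}} = {\to_{\ell' \to r~[\phi']}}$.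
   Context: Logically constrained term rewriting (LCTRS) setting. Sorts $\mathcal{S} = \mathcal{S}_{\mathit{theory}} \uplus \mathcal{S}_{\mathit{term}}$; signature $\Sigma = \Sigma_{\mathit{theory}} \cup \Sigma_{\mathit{terms}}$, where every symbol of $\Sigma_{\mathit{theory}}$ has argument and result sorts in $\mathcal{S}_{\mathit{theory}}$. Each theory sort $\iota$ has a nonempty universe $\mathcal{I}(\iota)$, and an interpretation $\mathcal{J}$ assigns to each $f:\iota_1\times\cdots\times\iota_n\to\iota$ in $\Sigma_{\mathit{theory}}$ a function $\mathcal{I}(\iota_1)\times\cdots\times\mathcal{I}(\iota_n)\to\mathcal{I}(\iota)$. For each theory sort $\iota$ there is a set $\mathrm{Val}_\iota\subseteq\Sigma_{\mathit{theory}}$ of value constants on which $\mathcal{J}$ is a bijection onto $\mathcal{I}(\iota)$; $\mathrm{Val}=\bigcup_\iota \mathrm{Val}_\iota$, and $\Sigma_{\mathit{terms}}\cap\Sigma_{\mathit{theory}}\subseteq\mathrm{Val}$. The theory includes sort $\mathsf{bool}$ with values $\mathsf{true},\mathsf{false}$, the usual connectives and $=,\neq$ on each theory sort, interpreted as expected. Theory terms are elements of $T(\Sigma_{\mathit{theory}},\mathcal{V})$; constraints are theory terms of sort $\mathsf{bool}$; $[\![\cdot]\!]$ denotes evaluation of ground theory terms. A substitution $\gamma$ respects a constraint $\phi$ if $x\gamma\in\mathrm{Val}$ for all $x\in\mathcal{V}ar(\phi)$ and $[\![\phi\gamma]\!]=\mathsf{true}$. A constrained rewrite rule $\ell\to r~[\varphi]$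 consists of terms $\ell,r$ of the same sort and a constraint $\varphi$, where $\ell$ is neither a theory term nor a variable. Its logical variables are $\mathcal{LV}ar(\ell\to r~[\varphi]) = \mathcal{V}ar(\varphi)\cup(\mathcal{V}ar(r)\setminus\mathcal{V}ar(\ell))$; a substitution $\gamma$ respects the rule if $x\gamma\in\mathrm{Val}$ for every logical variable $x$ and $[\![\varphi\gamma]\!]=\mathsf{true}$. For a single rule $\rho = \ell\to r~[\varphi]$, $s \to_{\rho} t$ holds iff there are a position $p$ of $s$ and a substitution $\gamma$ respecting $\rho$ with $s|_p=\ell\gamma$ and $t=s[r\gamma]_p$. *)

theory Defs
  imports Main
begin

datatype ('f, 'v) trm = Var 'v | Fun 'f "('f, 'v) trm list"

fun vars :: "('f, 'v) trm \<Rightarrow> 'v set" where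
  "vars (Var x) = {x}"
| "vars (Fun f ts) = (\<Union>t \<in> set ts. vars t)"

fun funs :: "('f, 'v) trm \<Rightarrow> 'f set" where
  "funs (Var x) = {}"
| "funs (Fun f ts) = insert f (\<Union>t \<in> set ts. funs t)"

type_synonym pos = "nat list"

function poss :: "('f, 'v) trm \<Rightarrow> pos set" where
  "poss (Var x) = {[]}"
| "poss (Fun f ts) = insert [] (\<Union>(i, t) \<in> set (zip [0..<length ts] ts). (\<lambda>p. i # p) ` poss t)"
  by pat_completeness auto
termination
  by (relation "measure size") (auto dest!: set_zip_rightD simp: less_Suc_eq_le intro!: size_list_estimation')

text \<open>Subterm at a position (meaningful for positions in poss).\<close>
fun subt_at :: "('f, 'v) trm \<Rightarrow> pos \<Rightarrow> ('f, 'v) trm" where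
  "subt_at t [] = t"
| "subt_at (Var x) (i # p) = Var x"
| "subt_at (Fun f ts) (i # p) = (if i < length ts then subt_at (ts ! i) p else Fun f ts)"

fun replace_at :: "('f, 'v) trm \<Rightarrow> pos \<Rightarrow> ('f, 'v) trm \<Rightarrow> ('f, 'v) trm" where
  "replace_at t [] u = u"
| "replace_at (Var x) (i # p) u = Var x"
| "replace_at (Fun f ts) (i # p) u =
     (if i < length ts then Fun f (ts[i := replace_at (ts ! i) p u]) else Fun f ts)"

fun replace_vars :: "('f, 'v) trm \<Rightarrow> pos list \<Rightarrow> 'v list \<Rightarrow> ('f, 'v) trm" where
  "replace_vars t (p # ps) (x # xs) = replace_vars (replace_at t p (Var x)) ps xs"
| "replace_vars t _ _ = t"

fun subst :: "('f, 'v) trm \<Rightarrow> ('v \<Rightarrow> ('f, 'v) trm) \<Rightarrow> ('f, 'v) trm" where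
  "subst (Var x) \<sigma> = \<sigma> x"
| "subst (Fun f ts) \<sigma> = Fun f (map (\<lambda>t. subst t \<sigma>) ts)"

record ('f, 's, 'u) lctrs_sig =
  syms_theory :: "'f set"
  syms_terms :: "'f set"
  sorts_theory :: "'s set"
  sorts_term :: "'s set"
  ftype :: "'f \<Rightarrow> 's list \<times> 's"
  univ :: "'s \<Rightarrow> 'u set"
  interp :: "'f \<Rightarrow> 'u list \<Rightarrow> 'u"
  vals :: "'f set"
  bool_sort :: 's
  tt_sym :: 'f
  ff_sym :: 'f
  and_sym :: 'f
  eq_sym :: "'s \<Rightarrow> 'f"

definition Val_of :: "('f, 's, 'u) lctrs_sig \<Rightarrow> 's \<Rightarrow> 'f set" where
  "Val_of S \<iota> = {c \<in> vals S. ftype S c = ([], \<iota>)}"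

definition true_val :: "('f, 's, 'u) lctrs_sig \<Rightarrow> 'u" where
  "true_val S = interp S (tt_sym S) []"

definition false_val :: "('f, 's, 'u) lctrs_sig \<Rightarrow> 'u" where
  "false_val S = interp S (ff_sym S) []"

inductive has_sort :: "('f, 's, 'u) lctrs_sig \<Rightarrow> ('v \<Rightarrow> 's) \<Rightarrow> ('f, 'v) trm \<Rightarrow> 's \<Rightarrow> bool"
  for S vsort where
  Var: "has_sort S vsort (Var x) (vsort x)"
| Fun: "f \<in> syms_theory S \<union> syms_terms S \<Longrightarrow> ftype S f = (ss, s) \<Longrightarrow>
        list_all2 (has_sort S vsort) ts ss \<Longrightarrow> has_sort S vsort (Fun f ts) s"

definition wf_lctrs :: "('f, 's, 'u) lctrs_sig \<Rightarrow> ('v \<Rightarrow> 's) \<Rightarrow> bool" where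
  "wf_lctrs S vsort \<longleftrightarrow>
     sorts_theory S \<inter> sorts_term S = {} \<and>
     (\<forall>x. vsort x \<in> sorts_theory S \<union> sorts_term S) \<and>
     (\<forall>f \<in> syms_theory S. set (fst (ftype S f)) \<subseteq> sorts_theory S \<and> snd (ftype S f) \<in> sorts_theory S) \<and>
     (\<forall>f \<in> syms_terms S. set (fst (ftype S f)) \<subseteq> sorts_theory S \<union> sorts_term S \<and>
                          snd (ftype S f) \<in> sorts_theory S \<union> sorts_term S) \<and>
     (\<forall>\<iota> \<in> sorts_theory S. univ S \<iota> \<noteq> {}) \<and>
     (\<forall>f \<in> syms_theory S. \<forall>us. list_all2 (\<in>) us (map (univ S) (fst (ftype S f))) \<longrightarrow>
                                   interp S f us \<in> univ S (snd (ftype S f))) \<and>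
     vals S = (\<Union>\<iota> \<in> sorts_theory S. Val_of S \<iota>) \<and>
     vals S \<subseteq> syms_theory S \<and>
     (\<forall>\<iota> \<in> sorts_theory S. bij_betw (\<lambda>c. interp S c []) (Val_of S \<iota>) (univ S \<iota>)) \<and>
     syms_terms S \<inter> syms_theory S \<subseteq> vals S \<and>
     bool_sort S \<in> sorts_theory S \<and>
     Val_of S (bool_sort S) = {tt_sym S, ff_sym S} \<and> tt_sym S \<noteq> ff_sym S \<and>
     and_sym S \<in> syms_theory S \<and>
     ftype S (and_sym S) = ([bool_sort S, bool_sort S], bool_sort S) \<and>
     (\<forall>a \<in> univ S (bool_sort S). \<forall>b \<in> univ S (bool_sort S).
        interp S (and_sym S) [a, b] =
          (if a = true_val S \<and> b = true_val S then true_val S else false_val S)) \<and>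
     (\<forall>\<iota> \<in> sorts_theory S. eq_sym S \<iota> \<in> syms_theory S \<and>
        ftype S (eq_sym S \<iota>) = ([\<iota>, \<iota>], bool_sort S) \<and>
        (\<forall>a \<in> univ S \<iota>. \<forall>b \<in> univ S \<iota>.
           interp S (eq_sym S \<iota>) [a, b] = (if a = b then true_val S else false_val S)))"

definition is_theory_term :: "('f, 's, 'u) lctrs_sig \<Rightarrow> ('f, 'v) trm \<Rightarrow> bool" where
  "is_theory_term S t \<longleftrightarrow> funs t \<subseteq> syms_theory S"

definition is_val :: "('f, 's, 'u) lctrs_sig \<Rightarrow> ('f, 'v) trm \<Rightarrow> bool" where
  "is_val S t \<longleftrightarrow> (\<exists>c. t = Fun c [] \<and> c \<in> vals S)"

fun eval :: "('f, 's, 'u) lctrs_sig \<Rightarrow> ('f, 'v) trm \<Rightarrow> 'u" where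
  "eval S (Var x) = undefined"
| "eval S (Fun f ts) = interp S f (map (eval S) ts)"

definition sort_preserving :: "('f, 's, 'u) lctrs_sig \<Rightarrow> ('v \<Rightarrow> 's) \<Rightarrow> ('v \<Rightarrow> ('f, 'v) trm) \<Rightarrow> bool" where
  "sort_preserving S vsort \<gamma> \<longleftrightarrow> (\<forall>x. has_sort S vsort (\<gamma> x) (vsort x))"

type_synonym ('f, 'v) crule = "('f, 'v) trm \<times> ('f, 'v) trm \<times> ('f, 'v) trm"
  \<comment> \<open>(l, r, phi) stands for l -> r [phi]\<close>

definition wf_rule :: "('f, 's, 'u) lctrs_sig \<Rightarrow> ('v \<Rightarrow> 's) \<Rightarrow> ('f, 'v) crule \<Rightarrow> bool" where
  "wf_rule S vsort \<rho> = (case \<rho> of (l, r, \<phi>) \<Rightarrow>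
     (\<exists>\<sigma>. has_sort S vsort l \<sigma> \<and> has_sort S vsort r \<sigma>) \<and>
     has_sort S vsort \<phi> (bool_sort S) \<and> is_theory_term S \<phi> \<and>
     \<not> is_theory_term S l \<and> (\<forall>x. l \<noteq> Var x))"

definition lvars :: "('f, 'v) crule \<Rightarrow> 'v set" where
  "lvars \<rho> = (case \<rho> of (l, r, \<phi>) \<Rightarrow> vars \<phi> \<union> (vars r - vars l))"

definition respects_rule :: "('f, 's, 'u) lctrs_sig \<Rightarrow> ('v \<Rightarrow> ('f, 'v) trm) \<Rightarrow> ('f, 'v) crule \<Rightarrow> bool" where
  "respects_rule S \<gamma> \<rho> = (case \<rho> of (l, r, \<phi>) \<Rightarrow>
     (\<forall>x \<in> lvars \<rho>. is_val S (\<gamma> x)) \<and> eval S (subst \<phi> \<gamma>) = true_val S)"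

definition rstep :: "('f, 's, 'u) lctrs_sig \<Rightarrow> ('v \<Rightarrow> 's) \<Rightarrow> ('f, 'v) crule \<Rightarrow>
    (('f, 'v) trm \<times> ('f, 'v) trm) set" where
  "rstep S vsort \<rho> = (case \<rho> of (l, r, \<phi>) \<Rightarrow>
     {(s, t). \<exists>p \<gamma>. p \<in> poss s \<and> sort_preserving S vsort \<gamma> \<and> respects_rule S \<gamma> \<rho> \<and>
        subt_at s p = subst l \<gamma> \<and> t = replace_at s p (subst r \<gamma>)})"

definition mk_and :: "('f, 's, 'u) lctrs_sig \<Rightarrow> ('f, 'v) trm \<Rightarrow> ('f, 'v) trm \<Rightarrow> ('f, 'v) trm" where
  "mk_and S a b = Fun (and_sym S) [a, b]"

definition mk_eq :: "('f, 's, 'u) lctrs_sig \<Rightarrow> 's \<Rightarrow> ('f, 'v) trm \<Rightarrow> ('f, 'v) trm \<Rightarrow> ('f, 'v) trm" where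
  "mk_eq S \<iota> a b = Fun (eq_sym S \<iota>) [a, b]"

fun conj_list :: "('f, 's, 'u) lctrs_sig \<Rightarrow> ('f, 'v) trm list \<Rightarrow> ('f, 'v) trm" where
  "conj_list S [] = Fun (tt_sym S) []"
| "conj_list S (a # as) = mk_and S a (conj_list S as)"

end

theory Submission
  imports Defs
begin


lemma Nil_poss[simp]: "[] \<in> poss t"
  by (cases t) auto

lemma poss_Cons_Fun[simp]: "(i # p \<in> poss (Fun f ts)) = (i < length ts \<and> p \<in> poss (ts ! i))"
proof
  assume "i # p \<in> poss (Fun f ts)"
  then show "i < length ts \<and> p \<in> poss (ts ! i)" by (auto simp: set_zip)
next
  assume a: "i < length ts \<and> p \<in> poss (ts ! i)"
  have m: "(i, ts ! i) \<in> set (zip [0..<length ts] ts)" using a by (simp add: set_zip) (rule exI[of _ i], simp)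
  have "i # p \<in> (\<lambda>(j, t). (#) j ` poss t) (i, ts ! i)" using a by simp
  from UN_I[where B="\<lambda>(j, t). (#) j ` poss t", OF m this] show "i # p \<in> poss (Fun f ts)" by (simp only: poss.simps) (rule insertI2)
qed

lemma poss_Fun_Nil[simp]: "poss (Fun f []) = {[]}" by simp

declare poss.simps(2)[simp del]

lemma poss_Var[simp]: "poss (Var x) = {[]}" by simp

lemma poss_append_subt: "p @ q \<in> poss t \<Longrightarrow> q \<in> poss (subt_at t p)"
proof (induction t p rule: subt_at.induct)
  case (1 t) then show ?case by simp
next
  case (2 x i p) then show ?case by simp
next
  case (3 f ts i p) then show ?case by auto
qed

lemma vars_subt: "p \<in> poss t \<Longrightarrow> vars (subt_at t p) \<subseteq> vars t"
proof (induction t p rule: subt_at.induct)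
  case (3 f ts i p) then show ?case by (auto dest!: nth_mem)
qed auto

lemma subst_replace_same:
  "p \<in> poss t \<Longrightarrow> subst u \<sigma> = subst (subt_at t p) \<sigma> \<Longrightarrow> subst (replace_at t p u) \<sigma> = subst t \<sigma>"
proof (induction t p u rule: replace_at.induct)
  case (3 f ts i p u)
  have i: "i < length ts" and p: "p \<in> poss (ts ! i)" using 3(2) by auto
  have e: "subst (replace_at (ts ! i) p u) \<sigma> = subst (ts ! i) \<sigma>"
    using 3(1)[OF i p] 3(3) i by simp
  have "(map (\<lambda>t. subst t \<sigma>) ts)[i := subst (ts ! i) \<sigma>] = (map (\<lambda>t. subst t \<sigma>) ts)[i := (map (\<lambda>t. subst t \<sigma>) ts) ! i]"
    using i by simp
  also have "\<dots> = map (\<lambda>t. subst t \<sigma>) ts" by (rule list_update_id)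
  finally have m: "(map (\<lambda>t. subst t \<sigma>) ts)[i := subst (ts ! i) \<sigma>] = map (\<lambda>t. subst t \<sigma>) ts" .
  show ?case using i by (simp only: replace_at.simps if_True subst.simps map_update e m)
qed auto

lemma replace_par:
  "p \<in> poss t \<Longrightarrow> q \<in> poss t \<Longrightarrow> (\<forall>r. q \<noteq> p @ r) \<Longrightarrow> (\<forall>r. p \<noteq> q @ r) \<Longrightarrow>
   q \<in> poss (replace_at t p u) \<and> subt_at (replace_at t p u) q = subt_at t q"
proof (induction t p u arbitrary: q rule: replace_at.induct)
  case (1 t u) then show ?case by auto
next
  case (2 x i p u) then show ?case by auto
next
  case (3 f ts i p u)
  show ?case
  proof (cases q)
    case Nil then show ?thesis using 3 by auto
  next
    case (Cons j q')
    show ?thesis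
    proof (cases "j = i")
      case True
      have "q' \<in> poss (replace_at (ts ! i) p u) \<and> subt_at (replace_at (ts ! i) p u) q' = subt_at (ts ! i) q'"
        using 3 Cons True by auto
      then show ?thesis using 3 Cons True by auto
    next
      case False then show ?thesis using 3 Cons by auto
    qed
  qed
qed

lemma subst_replace_vars:
  "length xs = length ps \<Longrightarrow> distinct ps \<Longrightarrow> \<forall>p\<in>set ps. p \<in> poss t \<Longrightarrow>
   \<forall>p\<in>set ps. \<forall>q\<in>set ps. p \<noteq> q \<longrightarrow> (\<forall>r. q \<noteq> p @ r) \<Longrightarrow>
   \<forall>(p,x)\<in>set (zip ps xs). \<sigma> x = subst (subt_at t p) \<sigma> \<Longrightarrow>
   subst (replace_vars t ps xs) \<sigma> = subst t \<sigma>"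
proof (induction ps arbitrary: xs t)
  case Nil then show ?case by simp
next
  case (Cons p ps)
  then obtain x xs' where xs: "xs = x # xs'" by (cases xs) auto
  define t1 where "t1 = replace_at t p (Var x)"
  have par: "\<And>q. q \<in> set ps \<Longrightarrow> q \<in> poss t1 \<and> subt_at t1 q = subt_at t q"
    unfolding t1_def
    apply (rule replace_par)
    using Cons.prems by auto
  have h1: "length xs' = length ps" using Cons.prems(1) xs by simp
  have h2: "distinct ps" using Cons.prems(2) by simp
  have h3: "\<forall>q\<in>set ps. q \<in> poss t1" using par by blast
  have h4: "\<forall>q\<in>set ps. \<forall>q'\<in>set ps. q \<noteq> q' \<longrightarrow> (\<forall>r. q' \<noteq> q @ r)"
    using Cons.prems(4) by (meson list.set_intros(2))
  have h5: "\<forall>(q,y)\<in>set (zip ps xs'). \<sigma> y = subst (subt_at t1 q) \<sigma>"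
  proof (intro ballI, clarify)
    fix q y assume qy: "(q, y) \<in> set (zip ps xs')"
    then have "(q, y) \<in> set (zip (p # ps) xs)" using xs by simp
    then have "\<sigma> y = subst (subt_at t q) \<sigma>" using Cons.prems(5) by blast
    moreover have "q \<in> set ps" using qy by (rule set_zip_leftD)
    ultimately show "\<sigma> y = subst (subt_at t1 q) \<sigma>" using par by simp
  qed
  have "subst (replace_vars t1 ps xs') \<sigma> = subst t1 \<sigma>"
    using Cons.IH[OF h1 h2 h3 h4 h5] .
  also have "\<dots> = subst t \<sigma>" unfolding t1_def
    apply (rule subst_replace_same) using Cons.prems(3) apply simp
    using Cons.prems(5) xs by simp
  finally show ?case using xs t1_def by simp
qed

lemma vars_subst: "vars (subst t \<sigma>) = (\<Union>x\<in>vars t. vars (\<sigma> x))"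
  by (induction t) auto

lemma subst_cong: "(\<forall>x\<in>vars t. \<sigma> x = \<tau> x) \<Longrightarrow> subst t \<sigma> = subst t \<tau>"
  by (induction t) auto

lemma subst_Var_id[simp]: "subst t Var = t"
  by (induction t) (auto simp: map_idI)

inductive_cases has_sort_VarE: "has_sort S vsort (Var x) s"
inductive_cases has_sort_FunE: "has_sort S vsort (Fun f ts) s"

lemma has_sort_subst:
  "has_sort S vsort t s \<Longrightarrow> sort_preserving S vsort \<sigma> \<Longrightarrow> has_sort S vsort (subst t \<sigma>) s"
proof (induction rule: has_sort.induct)
  case (Var x) then show ?case by (simp add: sort_preserving_def)
next
  case (Fun f ss s ts)
  have "list_all2 (has_sort S vsort) (map (\<lambda>t. subst t \<sigma>) ts) ss"
    using Fun by (auto simp: list_all2_conv_all_nth)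
  then show ?case using Fun by (auto intro: has_sort.Fun)
qed

lemma val_sort:
  assumes wf: "wf_lctrs S vsort" and hs: "has_sort S vsort t s" and v: "is_val S t"
  shows "s \<in> sorts_theory S \<and> (\<exists>c. t = Fun c [] \<and> c \<in> Val_of S s) \<and> eval S t \<in> univ S s"
proof -
  obtain c where t: "t = Fun c []" and c: "c \<in> vals S" using v by (auto simp: is_val_def)
  have ft: "ftype S c = ([], s)" using hs t by (auto elim!: has_sort_FunE)
  from c wf obtain \<iota> where \<iota>: "\<iota> \<in> sorts_theory S" "c \<in> Val_of S \<iota>" by (auto simp: wf_lctrs_def)
  then have "\<iota> = s" using ft by (auto simp: Val_of_def)
  moreover have "bij_betw (\<lambda>c. interp S c []) (Val_of S \<iota>) (univ S \<iota>)" using wf \<iota> by (auto simp: wf_lctrs_def)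
  ultimately show ?thesis using \<iota> t by (auto dest: bij_betw_apply)
qed

lemma eval_univ:
  assumes wf: "wf_lctrs S vsort"
  shows "has_sort S vsort t s \<Longrightarrow> funs t \<subseteq> syms_theory S \<Longrightarrow> sort_preserving S vsort \<sigma> \<Longrightarrow>
    (\<forall>x\<in>vars t. is_val S (\<sigma> x)) \<Longrightarrow> eval S (subst t \<sigma>) \<in> univ S s"
proof (induction rule: has_sort.induct)
  case (Var x)
  then show ?case using val_sort[OF wf, of "\<sigma> x" "vsort x"] by (auto simp: sort_preserving_def)
next
  case (Fun f ss s ts)
  have "list_all2 (\<in>) (map (\<lambda>t. eval S (subst t \<sigma>)) ts) (map (univ S) ss)"
  proof -
    { fix i assume i: "i < length ts"
      then have m: "ts ! i \<in> set ts" by simp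
      have "funs (ts ! i) \<subseteq> syms_theory S" using Fun.prems(1) m by auto
      moreover have "\<forall>x\<in>vars (ts ! i). is_val S (\<sigma> x)" using Fun.prems(3) m by auto
      moreover have "length ts = length ss" using Fun.IH by (simp add: list_all2_lengthD)
      ultimately have "eval S (subst (ts ! i) \<sigma>) \<in> univ S (ss ! i)"
        using Fun.IH Fun.prems(2) i by (auto simp: list_all2_conv_all_nth) }
    then show ?thesis using Fun.IH by (auto simp: list_all2_conv_all_nth)
  qed
  then show ?case using Fun wf unfolding wf_lctrs_def
    by (auto simp: comp_def)
qed

lemma tf:
  assumes wf: "wf_lctrs S vsort"
  shows "true_val S \<in> univ S (bool_sort S) \<and> false_val S \<in> univ S (bool_sort S) \<and> true_val S \<noteq> false_val S"
proof -
  have b: "bij_betw (\<lambda>c. interp S c []) (Val_of S (bool_sort S)) (univ S (bool_sort S))"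
    and V: "Val_of S (bool_sort S) = {tt_sym S, ff_sym S}" and ne: "tt_sym S \<noteq> ff_sym S"
    using wf by (auto simp: wf_lctrs_def)
  then show ?thesis unfolding true_val_def false_val_def
    by (auto simp: bij_betw_def inj_on_def)
qed

lemma eq_eval:
  assumes wf: "wf_lctrs S vsort" and "has_sort S vsort a \<iota>" "has_sort S vsort b \<iota>" "is_val S a" "is_val S b"
  shows "eval S (Fun (eq_sym S \<iota>) [a, b]) \<in> univ S (bool_sort S) \<and>
         (eval S (Fun (eq_sym S \<iota>) [a, b]) = true_val S \<longleftrightarrow> a = b)"
proof -
  from val_sort[OF wf assms(2,4)] obtain c where \<iota>: "\<iota> \<in> sorts_theory S" and a: "a = Fun c []" "c \<in> Val_of S \<iota>"
    and ea: "eval S a \<in> univ S \<iota>" by auto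
  from val_sort[OF wf assms(3,5)] obtain d where b: "b = Fun d []" "d \<in> Val_of S \<iota>"
    and eb: "eval S b \<in> univ S \<iota>" by auto
  have bij: "bij_betw (\<lambda>c. interp S c []) (Val_of S \<iota>) (univ S \<iota>)" using wf \<iota> by (auto simp: wf_lctrs_def)
  have eq: "interp S (eq_sym S \<iota>) [eval S a, eval S b] = (if eval S a = eval S b then true_val S else false_val S)"
    using wf \<iota> ea eb unfolding wf_lctrs_def by blast
  have "eval S a = eval S b \<longleftrightarrow> a = b"
    using bij a b by (auto simp: bij_betw_def inj_on_def)
  then show ?thesis using eq tf[OF wf] by auto
qed

lemma and_eval:
  assumes wf: "wf_lctrs S vsort" and "a \<in> univ S (bool_sort S)" "b \<in> univ S (bool_sort S)"
  shows "interp S (and_sym S) [a, b] \<in> univ S (bool_sort S) \<and>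
         (interp S (and_sym S) [a, b] = true_val S \<longleftrightarrow> a = true_val S \<and> b = true_val S)"
proof -
  have "interp S (and_sym S) [a, b] = (if a = true_val S \<and> b = true_val S then true_val S else false_val S)"
    using wf assms unfolding wf_lctrs_def by blast
  then show ?thesis using tf[OF wf] by auto
qed

lemma conj_eval:
  assumes wf: "wf_lctrs S vsort"
  shows "\<forall>a\<in>set as. eval S (subst a \<sigma>) \<in> univ S (bool_sort S) \<Longrightarrow>
    eval S (subst (conj_list S as) \<sigma>) \<in> univ S (bool_sort S) \<and>
    (eval S (subst (conj_list S as) \<sigma>) = true_val S \<longleftrightarrow> (\<forall>a\<in>set as. eval S (subst a \<sigma>) = true_val S))"
proof (induction as)
  case Nil then show ?case using tf[OF wf] by (simp add: true_val_def)
next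
  case (Cons a as)
  then show ?case using and_eval[OF wf, of "eval S (subst a \<sigma>)" "eval S (subst (conj_list S as) \<sigma>)"]
    by (simp add: mk_and_def)
qed



theorem theorem1:
  fixes S :: "('f, 's, 'u) lctrs_sig" and vsort :: "'v \<Rightarrow> 's"
    and l r \<phi> :: "('f, 'v) trm" and ps :: "pos list" and xs ys :: "'v list"
  assumes "wf_lctrs S vsort"
    and "wf_rule S vsort (l, r, \<phi>)"
    and "distinct ps"
    and "set ps = {p \<in> poss l. is_val S (subt_at l p) \<or> (\<exists>x \<in> vars \<phi>. subt_at l p = Var x)}"
    and "length xs = length ps"
    and "distinct xs"
    and "set xs \<inter> (vars l \<union> vars r \<union> vars \<phi>) = {}"
    and "\<forall>i < length ps. has_sort S vsort (subt_at l (ps ! i)) (vsort (xs ! i))"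
    and "distinct ys"
    and "set ys = vars r - (vars l \<union> vars \<phi>)"
  shows "rstep S vsort (l, r, \<phi>) =
         rstep S vsort (replace_vars l ps xs, r,
           mk_and S \<phi>
             (mk_and S
               (conj_list S (map (\<lambda>i. mk_eq S (vsort (xs ! i)) (Var (xs ! i)) (subt_at l (ps ! i)))
                                 [0..<length ps]))
               (conj_list S (map (\<lambda>y. mk_eq S (vsort y) (Var y) (Var y)) ys))))"
proof -
  note wf = assms(1)
  define l' where "l' = replace_vars l ps xs"
  define C1 where "C1 = conj_list S (map (\<lambda>i. mk_eq S (vsort (xs ! i)) (Var (xs ! i)) (subt_at l (ps ! i))) [0..<length ps])"
  define C2 where "C2 = conj_list S (map (\<lambda>y. mk_eq S (vsort y) (Var y) (Var y)) ys)"
  define \<phi>' where "\<phi>' = mk_and S \<phi> (mk_and S C1 C2)"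
  have hsphi: "has_sort S vsort \<phi> (bool_sort S)" and thphi: "funs \<phi> \<subseteq> syms_theory S"
    using assms(2) by (auto simp: wf_rule_def is_theory_term_def)
  have F1: "\<And>i. i < length ps \<Longrightarrow> ps ! i \<in> poss l \<and> (is_val S (subt_at l (ps ! i)) \<or> (\<exists>x\<in>vars \<phi>. subt_at l (ps ! i) = Var x))"
    using assms(4) nth_mem by blast
  have F2: "\<forall>p\<in>set ps. \<forall>q\<in>set ps. p \<noteq> q \<longrightarrow> (\<forall>r. q \<noteq> p @ r)"
  proof (intro ballI impI allI notI)
    fix p q r assume p: "p \<in> set ps" and q: "q \<in> set ps" and ne: "p \<noteq> q" and e: "q = p @ r"
    then obtain j r' where r: "r = j # r'" by (cases r) auto
    have "r \<in> poss (subt_at l p)" using q e assms(4) poss_append_subt by blast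
    moreover have "poss (subt_at l p) = {[]}" using p assms(4) by (auto simp: is_val_def)
    ultimately show False using r by simp
  qed
  have F3: "\<And>i. i < length ps \<Longrightarrow> vars (subt_at l (ps ! i)) \<subseteq> vars \<phi>"
    using F1 by (fastforce simp: is_val_def)
  have Fposs: "\<forall>p\<in>set ps. p \<in> poss l" using assms(4) by blast
  have L: "\<And>\<sigma>. (\<And>i. i < length ps \<Longrightarrow> \<sigma> (xs ! i) = subst (subt_at l (ps ! i)) \<sigma>) \<Longrightarrow> subst l' \<sigma> = subst l \<sigma>"
    unfolding l'_def
    apply (rule subst_replace_vars[OF assms(5,3) Fposs F2])
    using assms(5) by (auto simp: in_set_zip)
  define m where "m = map_of (zip xs ps)"
  have m_nth: "\<And>i. i < length ps \<Longrightarrow> m (xs ! i) = Some (ps ! i)"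
    unfolding m_def using map_of_zip_nth assms(5,6) by metis
  have m_none: "\<And>z. z \<notin> set xs \<Longrightarrow> m z = None"
    unfolding m_def using assms(5) by simp
  have F4: "vars l \<subseteq> vars l' \<union> vars \<phi>"
  proof -
    define \<sigma>0 where "\<sigma>0 = (\<lambda>z. case m z of Some p \<Rightarrow> subt_at l p | None \<Rightarrow> Var z)"
    have id: "\<forall>z\<in>vars l. \<sigma>0 z = Var z"
    proof
      fix z assume "z \<in> vars l"
      then have "z \<notin> set xs" using assms(7) by blast
      then show "\<sigma>0 z = Var z" using m_none by (simp add: \<sigma>0_def)
    qed
    have "subst l' \<sigma>0 = subst l \<sigma>0"
    proof (rule L)
      fix i assume i: "i < length ps"
      have "vars (subt_at l (ps ! i)) \<subseteq> vars l" using vars_subt F1 i by blast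
      then have "subst (subt_at l (ps ! i)) \<sigma>0 = subst (subt_at l (ps ! i)) Var"
        using id by (intro subst_cong) auto
      then show "\<sigma>0 (xs ! i) = subst (subt_at l (ps ! i)) \<sigma>0" using m_nth[OF i] by (simp add: \<sigma>0_def)
    qed
    also have "\<dots> = l" using id subst_cong[of l \<sigma>0 Var] by simp
    finally have "vars l = (\<Union>x\<in>vars l'. vars (\<sigma>0 x))" using vars_subst by metis
    moreover have "\<And>x. vars (\<sigma>0 x) \<subseteq> insert x (vars \<phi>)"
    proof -
      fix x show "vars (\<sigma>0 x) \<subseteq> insert x (vars \<phi>)"
      proof (cases "x \<in> set xs")
        case True
        then obtain i where i: "i < length ps" "x = xs ! i" using assms(5) by (metis in_set_conv_nth)
        then show ?thesis using m_nth F3 by (auto simp: \<sigma>0_def)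
      next
        case False then show ?thesis using m_none by (simp add: \<sigma>0_def)
      qed
    qed
    ultimately show ?thesis by blast
  qed
  have vars_conj: "\<And>as. vars (conj_list S as) = (\<Union>a\<in>set as. vars a)"
    subgoal for as by (induction as) (auto simp: mk_and_def)
    done
  have vphi': "vars \<phi>' = vars \<phi> \<union> set xs \<union> set ys"
  proof -
    have "vars C1 = (\<Union>i<length ps. insert (xs ! i) (vars (subt_at l (ps ! i))))"
      unfolding C1_def vars_conj by (auto simp: mk_eq_def)
    also have "\<dots> \<subseteq> set xs \<union> vars \<phi>" using F3 assms(5) by auto
    finally have a: "vars C1 \<subseteq> set xs \<union> vars \<phi>" .
    have b: "set xs \<subseteq> vars C1" unfolding C1_def vars_conj using assms(5)
      by (auto simp: mk_eq_def in_set_conv_nth) (metis atLeastLessThan_iff le0)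
    have c: "vars C2 = set ys" unfolding C2_def vars_conj by (auto simp: mk_eq_def)
    show ?thesis unfolding \<phi>'_def using a b c by (auto simp: mk_and_def)
  qed
  have valsub: "\<And>(\<sigma> :: 'v \<Rightarrow> ('f, 'v) trm) i. i < length ps \<Longrightarrow> (\<forall>z\<in>vars \<phi>. is_val S (\<sigma> z)) \<Longrightarrow> is_val S (subst (subt_at l (ps ! i)) \<sigma>)"
  proof -
    fix \<sigma> :: "'v \<Rightarrow> ('f, 'v) trm" and i assume i: "i < length ps" and v: "\<forall>z\<in>vars \<phi>. is_val S (\<sigma> z)"
    show "is_val S (subst (subt_at l (ps ! i)) \<sigma>)"
      using F1[OF i] v by (auto simp: is_val_def)
  qed
  have EV: "\<And>\<sigma> :: 'v \<Rightarrow> ('f, 'v) trm. sort_preserving S vsort \<sigma> \<Longrightarrow> (\<forall>z\<in>vars \<phi>'. is_val S (\<sigma> z)) \<Longrightarrow>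
     (eval S (subst \<phi>' \<sigma>) = true_val S \<longleftrightarrow>
       eval S (subst \<phi> \<sigma>) = true_val S \<and> (\<forall>i<length ps. \<sigma> (xs ! i) = subst (subt_at l (ps ! i)) \<sigma>))"
  proof -
    fix \<sigma> :: "'v \<Rightarrow> ('f, 'v) trm" assume sp: "sort_preserving S vsort \<sigma>" and v: "\<forall>z\<in>vars \<phi>'. is_val S (\<sigma> z)"
    have vphi: "\<forall>z\<in>vars \<phi>. is_val S (\<sigma> z)" using v vphi' by blast
    have e0: "eval S (subst \<phi> \<sigma>) \<in> univ S (bool_sort S)"
      using eval_univ[OF wf hsphi thphi sp vphi] .
    define E where "E i = mk_eq S (vsort (xs ! i)) (Var (xs ! i)) (subt_at l (ps ! i))" for i
    define Y where "Y y = mk_eq S (vsort y) (Var y) (Var y)" for y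
    have eqi: "eval S (subst (E i) \<sigma>) \<in> univ S (bool_sort S) \<and>
        (eval S (subst (E i) \<sigma>) = true_val S \<longleftrightarrow> \<sigma> (xs ! i) = subst (subt_at l (ps ! i)) \<sigma>)"
      if i: "i < length ps" for i
    proof -
      have h1: "has_sort S vsort (\<sigma> (xs ! i)) (vsort (xs ! i))" using sp by (simp add: sort_preserving_def)
      have h2: "has_sort S vsort (subst (subt_at l (ps ! i)) \<sigma>) (vsort (xs ! i))"
        using has_sort_subst[OF assms(8)[rule_format, OF i] sp] .
      have "xs ! i \<in> set xs" using i assms(5) by simp
      then have v1: "is_val S (\<sigma> (xs ! i))" using v vphi' by blast
      have v2: "is_val S (subst (subt_at l (ps ! i)) \<sigma>)" using valsub[OF i vphi] .
      show ?thesis using eq_eval[OF wf h1 h2 v1 v2] by (simp add: mk_eq_def E_def)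
    qed
    have eqy: "eval S (subst (Y y) \<sigma>) \<in> univ S (bool_sort S) \<and>
        eval S (subst (Y y) \<sigma>) = true_val S" if y: "y \<in> set ys" for y
    proof -
      have h1: "has_sort S vsort (\<sigma> y) (vsort y)" using sp by (simp add: sort_preserving_def)
      have v1: "is_val S (\<sigma> y)" using v vphi' y by blast
      show ?thesis using eq_eval[OF wf h1 h1 v1 v1] by (simp add: mk_eq_def Y_def) metis
    qed
    have C1E: "C1 = conj_list S (map E [0..<length ps])" unfolding C1_def E_def by simp
    have C2Y: "C2 = conj_list S (map Y ys)" unfolding C2_def Y_def by simp
    have p1: "\<forall>a\<in>set (map E [0..<length ps]). eval S (subst a \<sigma>) \<in> univ S (bool_sort S)"
      using eqi by auto
    have p2: "\<forall>a\<in>set (map Y ys). eval S (subst a \<sigma>) \<in> univ S (bool_sort S)"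
      using eqy by (simp only: set_map ball_simps) blast
    have c1: "eval S (subst C1 \<sigma>) \<in> univ S (bool_sort S) \<and>
       (eval S (subst C1 \<sigma>) = true_val S \<longleftrightarrow> (\<forall>i<length ps. \<sigma> (xs ! i) = subst (subt_at l (ps ! i)) \<sigma>))"
    proof -
      have iff: "(\<forall>a\<in>set (map E [0..<length ps]). eval S (subst a \<sigma>) = true_val S) =
          (\<forall>i<length ps. \<sigma> (xs ! i) = subst (subt_at l (ps ! i)) \<sigma>)"
        using eqi by auto
      show ?thesis unfolding C1E iff[symmetric] by (rule conj_eval[OF wf p1])
    qed
    have c2: "eval S (subst C2 \<sigma>) \<in> univ S (bool_sort S) \<and> eval S (subst C2 \<sigma>) = true_val S"
      unfolding C2Y using conj_eval[OF wf p2] eqy tf[OF wf] by simp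
    have a12: "eval S (subst (mk_and S C1 C2) \<sigma>) \<in> univ S (bool_sort S) \<and>
       (eval S (subst (mk_and S C1 C2) \<sigma>) = true_val S \<longleftrightarrow> (\<forall>i<length ps. \<sigma> (xs ! i) = subst (subt_at l (ps ! i)) \<sigma>))"
      using and_eval[OF wf, of "eval S (subst C1 \<sigma>)" "eval S (subst C2 \<sigma>)"] c1 c2 tf[OF wf] by (simp add: mk_and_def)
    show "eval S (subst \<phi>' \<sigma>) = true_val S \<longleftrightarrow>
       eval S (subst \<phi> \<sigma>) = true_val S \<and> (\<forall>i<length ps. \<sigma> (xs ! i) = subst (subt_at l (ps ! i)) \<sigma>)"
      using and_eval[OF wf e0, of "eval S (subst (mk_and S C1 C2) \<sigma>)"] a12 tf[OF wf] by (simp add: \<phi>'_def mk_and_def)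
  qed
  have resp: "\<And>\<gamma> a b c. respects_rule S \<gamma> (a, b, c) \<longleftrightarrow>
      (\<forall>x\<in>vars c \<union> (vars b - vars a). is_val S (\<gamma> x)) \<and> eval S (subst c \<gamma>) = true_val S"
    by (simp add: respects_rule_def lvars_def)
  have dir1: "\<And>\<gamma>. sort_preserving S vsort \<gamma> \<Longrightarrow> respects_rule S \<gamma> (l, r, \<phi>) \<Longrightarrow>
     \<exists>\<gamma>'. sort_preserving S vsort \<gamma>' \<and> respects_rule S \<gamma>' (l', r, \<phi>') \<and>
       subst l' \<gamma>' = subst l \<gamma> \<and> subst r \<gamma>' = subst r \<gamma>"
  proof -
    fix \<gamma> assume sp: "sort_preserving S vsort \<gamma>" and rs: "respects_rule S \<gamma> (l, r, \<phi>)"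
    have vg: "\<forall>x\<in>vars \<phi> \<union> (vars r - vars l). is_val S (\<gamma> x)" and eg: "eval S (subst \<phi> \<gamma>) = true_val S"
      using rs unfolding resp by auto
    define \<gamma>' where "\<gamma>' = (\<lambda>z. case m z of Some p \<Rightarrow> subst (subt_at l p) \<gamma> | None \<Rightarrow> \<gamma> z)"
    have out: "\<And>z. z \<notin> set xs \<Longrightarrow> \<gamma>' z = \<gamma> z" using m_none by (simp add: \<gamma>'_def)
    have inx: "\<And>i. i < length ps \<Longrightarrow> \<gamma>' (xs ! i) = subst (subt_at l (ps ! i)) \<gamma>"
      using m_nth by (simp add: \<gamma>'_def)
    have agl: "\<And>t. vars t \<subseteq> vars l \<union> vars r \<union> vars \<phi> \<Longrightarrow> subst t \<gamma>' = subst t \<gamma>"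
    proof -
      fix t :: "('f, 'v) trm" assume "vars t \<subseteq> vars l \<union> vars r \<union> vars \<phi>"
      then have "\<forall>z\<in>vars t. z \<notin> set xs" using assms(7) by blast
      then show "subst t \<gamma>' = subst t \<gamma>" using out by (intro subst_cong) auto
    qed
    have inx': "\<And>i. i < length ps \<Longrightarrow> \<gamma>' (xs ! i) = subst (subt_at l (ps ! i)) \<gamma>'"
    proof -
      fix i assume i: "i < length ps"
      have "vars (subt_at l (ps ! i)) \<subseteq> vars l \<union> vars r \<union> vars \<phi>" using vars_subt F1[OF i] by blast
      then show "\<gamma>' (xs ! i) = subst (subt_at l (ps ! i)) \<gamma>'" using agl inx[OF i] by simp
    qed
    have sp': "sort_preserving S vsort \<gamma>'"
      unfolding sort_preserving_def
    proof
      fix z show "has_sort S vsort (\<gamma>' z) (vsort z)"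
      proof (cases "z \<in> set xs")
        case True
        then obtain i where i: "i < length ps" "z = xs ! i" using assms(5) by (metis in_set_conv_nth)
        then show ?thesis using inx has_sort_subst assms(8) sp by metis
      next
        case False then show ?thesis using out sp by (simp add: sort_preserving_def)
      qed
    qed
    have l1: "subst l' \<gamma>' = subst l \<gamma>" using L[OF inx'] agl[of l, OF Un_upper1[THEN subset_trans, OF Un_upper1]] by simp
    have r1: "subst r \<gamma>' = subst r \<gamma>" by (rule agl) blast
    have vphi: "\<forall>z\<in>vars \<phi>. is_val S (\<gamma> z)" using vg by blast
    have vals': "\<forall>x\<in>vars \<phi>' \<union> (vars r - vars l'). is_val S (\<gamma>' x)"
    proof
      fix x assume x: "x \<in> vars \<phi>' \<union> (vars r - vars l')"
      show "is_val S (\<gamma>' x)"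
      proof (cases "x \<in> set xs")
        case True
        then obtain i where i: "i < length ps" "x = xs ! i" using assms(5) by (metis in_set_conv_nth)
        then show ?thesis using inx valsub vphi by metis
      next
        case False
        then have "x \<in> vars \<phi> \<union> (vars r - vars l)" using x vphi' assms(10) F4 by auto
        then show ?thesis using False out vg by auto
      qed
    qed
    have e': "eval S (subst \<phi>' \<gamma>') = true_val S"
      using EV[OF sp'] vals' inx' eg agl[of \<phi>] by auto
    show "?thesis \<gamma>" using sp' vals' e' l1 r1 resp by blast
  qed
  have dir2: "\<And>\<gamma>. sort_preserving S vsort \<gamma> \<Longrightarrow> respects_rule S \<gamma> (l', r, \<phi>') \<Longrightarrow>
     respects_rule S \<gamma> (l, r, \<phi>) \<and> subst l' \<gamma> = subst l \<gamma>"
  proof -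
    fix \<gamma> assume sp: "sort_preserving S vsort \<gamma>" and rs: "respects_rule S \<gamma> (l', r, \<phi>')"
    have vg: "\<forall>x\<in>vars \<phi>' \<union> (vars r - vars l'). is_val S (\<gamma> x)" and eg: "eval S (subst \<phi>' \<gamma>) = true_val S"
      using rs unfolding resp by auto
    have ev: "eval S (subst \<phi> \<gamma>) = true_val S" and eqs: "\<forall>i<length ps. \<gamma> (xs ! i) = subst (subt_at l (ps ! i)) \<gamma>"
      using EV[OF sp] vg eg by auto
    have "\<forall>x\<in>vars \<phi> \<union> (vars r - vars l). is_val S (\<gamma> x)"
      using vg vphi' assms(10) by auto
    then have "respects_rule S \<gamma> (l, r, \<phi>)" using ev unfolding resp by blast
    moreover have "subst l' \<gamma> = subst l \<gamma>" using L eqs by blast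
    ultimately show "respects_rule S \<gamma> (l, r, \<phi>) \<and> subst l' \<gamma> = subst l \<gamma>" by blast
  qed
  have eq: "rstep S vsort (l, r, \<phi>) = rstep S vsort (l', r, \<phi>')"
  proof (intro set_eqI iffI)
    fix st assume "st \<in> rstep S vsort (l, r, \<phi>)"
    then obtain s t p \<gamma> where st: "st = (s, t)" and h: "p \<in> poss s" "sort_preserving S vsort \<gamma>" "respects_rule S \<gamma> (l, r, \<phi>)"
      "subt_at s p = subst l \<gamma>" "t = replace_at s p (subst r \<gamma>)"
      by (auto simp: rstep_def)
    obtain \<gamma>' where g: "sort_preserving S vsort \<gamma>'" "respects_rule S \<gamma>' (l', r, \<phi>')"
       "subst l' \<gamma>' = subst l \<gamma>" "subst r \<gamma>' = subst r \<gamma>" using dir1[OF h(2,3)] by blast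
    show "st \<in> rstep S vsort (l', r, \<phi>')" unfolding rstep_def st using h g
      by (simp only: prod.case mem_Collect_eq) (rule exI[of _ p], rule exI[of _ \<gamma>'], simp)
  next
    fix st assume "st \<in> rstep S vsort (l', r, \<phi>')"
    then obtain s t p \<gamma> where st: "st = (s, t)" and h: "p \<in> poss s" "sort_preserving S vsort \<gamma>" "respects_rule S \<gamma> (l', r, \<phi>')"
      "subt_at s p = subst l' \<gamma>" "t = replace_at s p (subst r \<gamma>)"
      by (auto simp: rstep_def)
    show "st \<in> rstep S vsort (l, r, \<phi>)" unfolding rstep_def st using h dir2[OF h(2,3)]
      by (simp only: prod.case mem_Collect_eq) (rule exI[of _ p], rule exI[of _ \<gamma>], simp)
  qed
  then show ?thesis unfolding l'_def \<phi>'_def C1_def C2_def .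
qed

end
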